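(* Let $\mathcal N$ be a network with parties $A_1,\dots,A_n$ all of whose sources are bipartite, let $p$ be the output distribution of a causally consistent model on $\mathcal N$ (finite output alphabets), and let $f_i$ be arbitrary real-valued functions of the outputs $a_i$. Then for every sign function $\epsilon$ on $\mathcal N$ and every sign matrix $\Gamma_\epsilon$ associated to $\epsilon$, the Schur product $\mathcal C(f_1,\dots,f_n)\circ\Gamma_\epsilon$ is positive semidefinite.
   Context: A network $\mathcal N$ is a bipartite graph between sources $S_\alpha$ and parties $A_i$ ($i=1,\dots,n$); $\alpha\to i$ means $S_\alpha$ is adjacent to $A_i$; no isolated vertices, and no two sources with comparable sets of adjacent parties. Here every source is adjacent to exactly two parties. Covariance matrix: $\mathcal C(f_1,\dots,f_n)_{ij}=\mathbb E[\bar f_i f_j]-\mathbb E[\bar f_i]\,\mathbb E[f_j]$. The Schur product is $(M\circ N)_{ij}=M_{ij}N_{ij}$. A sign function $\epsilon$ assigns $\epsilon(\alpha)\in\{\pm1\}$ to each source. A sign matrix $\Gamma_\epsilon=(\gamma_{ij})$ is a real symmetric $n\times n$ matrix with $\gamma_{ii}=1$ and $\gamma_{ij}=\epsilon(\alpha)$ whenever $i\neq j$ and $\alpha\to i,j$; entries $\gamma_{ij}$ for $i\ne j$ sharing no source are arbitrary. Non-fanout inflation of order $d\ge 2$: choose, for every pair $(\alpha,i)$ with $\alpha\to i$, a permutation $\pi_i^\alpha$ of $\{1,\dots,d\}$. The inflated network has parties $A_i^{(k)}$ and sources $S_\alpha^{(k)}$ ($1\le k\le d$), with $S_\alpha^{(k)}$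 adjacent to $A_i^{((\pi_i^\alpha)^{-1}(k))}$ whenever $\alpha\to i$, and no other adjacencies. Causally consistent model on $\mathcal N$: a joint distribution $p(a_1,\dots,a_n)$ of the outputs of $\mathcal N$ together with, for every non-fanout inflation of every order $d\ge2$, a joint distribution of the outputs $a_i^{(k)}$ of its parties, such that: (C0) if $A_i\neq A_j$ share no source in $\mathcal N$, then $p(a_i,a_j)=p(a_i)p(a_j)$; (C1) in every inflation, each $a_i^{(k)}$ has marginal $p(a_i)$, and if $A_i^{(k)}$ and $A_j^{(l)}$ with $i\neq j$ share a source in the inflation, then $(a_i^{(k)},a_j^{(l)})$ has joint distribution $p(a_i,a_j)$; (C2) in every inflation, if two distinct parties share no source, the joint distribution of their outputs is the product of their marginals. *)

theory Defs
  imports Complex_Main "HOL-Library.FuncSet" "HOL-Combinatorics.Permutations"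
begin

text \<open>Parties are indexed by 0..n-1; sources form a set S of some type 's;
  adj alpha i means source alpha is adjacent to party i.
  All outputs take values in a common finite type 'a (finite alphabets).\<close>

definition bipartite_network :: "nat \<Rightarrow> 's set \<Rightarrow> ('s \<Rightarrow> nat \<Rightarrow> bool) \<Rightarrow> bool" where
  "bipartite_network n S adj \<longleftrightarrow>
     finite S \<and>
     (\<forall>\<alpha>\<in>S. card {i. i < n \<and> adj \<alpha> i} = 2) \<and>
     (\<forall>i<n. \<exists>\<alpha>\<in>S. adj \<alpha> i) \<and>
     (\<forall>\<alpha>\<in>S. \<forall>\<beta>\<in>S. \<alpha> \<noteq> \<beta> \<longrightarrow>
        \<not> {i. i < n \<and> adj \<alpha> i} \<subseteq> {i. i < n \<and> adj \<beta> i})"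

definition outs :: "'i set \<Rightarrow> ('i \<Rightarrow> 'a) set" where
  "outs I = PiE I (\<lambda>_. UNIV)"

definition is_distr :: "'i set \<Rightarrow> (('i \<Rightarrow> 'a) \<Rightarrow> real) \<Rightarrow> bool" where
  "is_distr I q \<longleftrightarrow> (\<forall>x\<in>outs I. q x \<ge> 0) \<and> sum q (outs I) = 1"

definition marg1 :: "'i set \<Rightarrow> (('i \<Rightarrow> 'a) \<Rightarrow> real) \<Rightarrow> 'i \<Rightarrow> 'a \<Rightarrow> real" where
  "marg1 I q u a = sum q {x \<in> outs I. x u = a}"

definition marg2 :: "'i set \<Rightarrow> (('i \<Rightarrow> 'a) \<Rightarrow> real) \<Rightarrow> 'i \<Rightarrow> 'i \<Rightarrow> 'a \<Rightarrow> 'a \<Rightarrow> real" where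
  "marg2 I q u v a b = sum q {x \<in> outs I. x u = a \<and> x v = b}"

definition share_source :: "'s set \<Rightarrow> ('s \<Rightarrow> nat \<Rightarrow> bool) \<Rightarrow> nat \<Rightarrow> nat \<Rightarrow> bool" where
  "share_source S adj i j \<longleftrightarrow> (\<exists>\<alpha>\<in>S. adj \<alpha> i \<and> adj \<alpha> j)"

text \<open>Non-fanout inflation of order d, given by permutations pi alpha i of {0..<d}
  (for alpha adjacent to i). Party (i,k) is adjacent to source (alpha, pi alpha i k),
  i.e. source (alpha,m) is adjacent to party (i, (pi alpha i)^-1 m).\<close>
definition valid_perms :: "nat \<Rightarrow> 's set \<Rightarrow> ('s \<Rightarrow> nat \<Rightarrow> bool) \<Rightarrow> nat \<Rightarrow> ('s \<Rightarrow> nat \<Rightarrow> nat \<Rightarrow> nat) \<Rightarrow> bool" where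
  "valid_perms n S adj d \<pi> \<longleftrightarrow> (\<forall>\<alpha>\<in>S. \<forall>i<n. adj \<alpha> i \<longrightarrow> \<pi> \<alpha> i permutes {..<d})"

definition infl_share :: "'s set \<Rightarrow> ('s \<Rightarrow> nat \<Rightarrow> bool) \<Rightarrow> ('s \<Rightarrow> nat \<Rightarrow> nat \<Rightarrow> nat)
    \<Rightarrow> nat \<times> nat \<Rightarrow> nat \<times> nat \<Rightarrow> bool" where
  "infl_share S adj \<pi> u v \<longleftrightarrow>
     (\<exists>\<alpha>\<in>S. adj \<alpha> (fst u) \<and> adj \<alpha> (fst v) \<and> \<pi> \<alpha> (fst u) (snd u) = \<pi> \<alpha> (fst v) (snd v))"

definition causally_consistent ::
  "nat \<Rightarrow> 's set \<Rightarrow> ('s \<Rightarrow> nat \<Rightarrow> bool) \<Rightarrow> ((nat \<Rightarrow> 'a) \<Rightarrow> real) \<Rightarrow> bool" where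
  "causally_consistent n S adj p \<longleftrightarrow>
     is_distr {..<n} p \<and>
     \<comment> \<open>C0\<close>
     (\<forall>i<n. \<forall>j<n. i \<noteq> j \<and> \<not> share_source S adj i j \<longrightarrow>
        (\<forall>a b. marg2 {..<n} p i j a b = marg1 {..<n} p i a * marg1 {..<n} p j b)) \<and>
     (\<forall>d\<ge>2. \<forall>\<pi>. valid_perms n S adj d \<pi> \<longrightarrow>
        (\<exists>q :: (nat \<times> nat \<Rightarrow> 'a) \<Rightarrow> real.
           is_distr ({..<n} \<times> {..<d}) q \<and>
           \<comment> \<open>C1\<close>
           (\<forall>i<n. \<forall>k<d. \<forall>a. marg1 ({..<n} \<times> {..<d}) q (i,k) a = marg1 {..<n} p i a) \<and>
           (\<forall>i<n. \<forall>j<n. \<forall>k<d. \<forall>l<d. i \<noteq> j \<and> infl_share S adj \<pi> (i,k) (j,l) \<longrightarrow>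
              (\<forall>a b. marg2 ({..<n} \<times> {..<d}) q (i,k) (j,l) a b = marg2 {..<n} p i j a b)) \<and>
           \<comment> \<open>C2\<close>
           (\<forall>u\<in>{..<n} \<times> {..<d}. \<forall>v\<in>{..<n} \<times> {..<d}. u \<noteq> v \<and> \<not> infl_share S adj \<pi> u v \<longrightarrow>
              (\<forall>a b. marg2 ({..<n} \<times> {..<d}) q u v a b
                     = marg1 ({..<n} \<times> {..<d}) q u a * marg1 ({..<n} \<times> {..<d}) q v b))))"

definition expect :: "nat \<Rightarrow> ((nat \<Rightarrow> 'a) \<Rightarrow> real) \<Rightarrow> ((nat \<Rightarrow> 'a) \<Rightarrow> real) \<Rightarrow> real" where
  "expect n p g = (\<Sum>x\<in>outs {..<n}. p x * g x)"

definition covariance :: "nat \<Rightarrow> ((nat \<Rightarrow> 'a) \<Rightarrow> real) \<Rightarrow> (nat \<Rightarrow> 'a \<Rightarrow> real) \<Rightarrow> nat \<Rightarrow> nat \<Rightarrow> real" where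
  "covariance n p f i j =
     expect n p (\<lambda>x. f i (x i) * f j (x j)) - expect n p (\<lambda>x. f i (x i)) * expect n p (\<lambda>x. f j (x j))"

definition sign_function :: "'s set \<Rightarrow> ('s \<Rightarrow> real) \<Rightarrow> bool" where
  "sign_function S \<epsilon> \<longleftrightarrow> (\<forall>\<alpha>\<in>S. \<epsilon> \<alpha> = 1 \<or> \<epsilon> \<alpha> = -1)"

definition sign_matrix :: "nat \<Rightarrow> 's set \<Rightarrow> ('s \<Rightarrow> nat \<Rightarrow> bool) \<Rightarrow> ('s \<Rightarrow> real) \<Rightarrow> (nat \<Rightarrow> nat \<Rightarrow> real) \<Rightarrow> bool" where
  "sign_matrix n S adj \<epsilon> \<Gamma> \<longleftrightarrow>
     (\<forall>i<n. \<forall>j<n. \<Gamma> i j = \<Gamma> j i) \<and>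
     (\<forall>i<n. \<Gamma> i i = 1) \<and>
     (\<forall>\<alpha>\<in>S. \<forall>i<n. \<forall>j<n. i \<noteq> j \<and> adj \<alpha> i \<and> adj \<alpha> j \<longrightarrow> \<Gamma> i j = \<epsilon> \<alpha>)"

definition schur :: "(nat \<Rightarrow> nat \<Rightarrow> real) \<Rightarrow> (nat \<Rightarrow> nat \<Rightarrow> real) \<Rightarrow> nat \<Rightarrow> nat \<Rightarrow> real" where
  "schur M N i j = M i j * N i j"

definition psd :: "nat \<Rightarrow> (nat \<Rightarrow> nat \<Rightarrow> real) \<Rightarrow> bool" where
  "psd n M \<longleftrightarrow> (\<forall>i<n. \<forall>j<n. M i j = M j i) \<and>
     (\<forall>v :: nat \<Rightarrow> real. (\<Sum>i<n. \<Sum>j<n. v i * M i j * v j) \<ge> 0)"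

end

theory Submission imports Defs begin

lemma fin_outs: "finite I \<Longrightarrow> finite (outs (I::'i set) :: ('i\<Rightarrow>'a::finite) set)"
  by (simp add: outs_def finite_PiE)

lemma L1:
  fixes q :: "('i \<Rightarrow> 'a::finite) \<Rightarrow> real"
  assumes "finite I"
  shows "(\<Sum>x\<in>outs I. q x * g (x u)) = (\<Sum>a\<in>UNIV. g a * marg1 I q u a)"
proof -
  have fin: "finite (outs I :: ('i\<Rightarrow>'a) set)" using fin_outs assms by blast
  have "(\<Sum>a\<in>UNIV. g a * marg1 I q u a) = (\<Sum>a\<in>UNIV. \<Sum>x\<in>outs I. if x u = a then q x * g (x u) else 0)"
    unfolding marg1_def using fin
    by (auto simp add: sum_distrib_left sum.inter_filter intro!: sum.cong)
  also have "\<dots> = (\<Sum>x\<in>outs I. \<Sum>a\<in>UNIV. if x u = a then q x * g (x u) else 0)"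
    by (rule sum.swap)
  also have "\<dots> = (\<Sum>x\<in>outs I. q x * g (x u))" by simp
  finally show ?thesis by simp
qed

lemma L2:
  fixes q :: "('i \<Rightarrow> 'a::finite) \<Rightarrow> real"
  assumes "finite I"
  shows "(\<Sum>x\<in>outs I. q x * (g (x u) * h (x v))) = (\<Sum>a\<in>UNIV. \<Sum>b\<in>UNIV. g a * h b * marg2 I q u v a b)"
proof -
  have fin: "finite (outs I :: ('i\<Rightarrow>'a) set)" using fin_outs assms by blast
  have "(\<Sum>a\<in>UNIV. \<Sum>b\<in>UNIV. g a * h b * marg2 I q u v a b) = (\<Sum>a\<in>UNIV. \<Sum>b\<in>UNIV. \<Sum>x\<in>outs I. if x u = a \<and> x v = b then q x * (g (x u) * h (x v)) else 0)"
    unfolding marg2_def using fin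
    by (auto simp add: sum_distrib_left sum.inter_filter intro!: sum.cong)
  also have "\<dots> = (\<Sum>a\<in>UNIV. \<Sum>x\<in>outs I. \<Sum>b\<in>UNIV. if x u = a \<and> x v = b then q x * (g (x u) * h (x v)) else 0)"
    by (rule sum.cong[OF refl], rule sum.swap)
  also have "\<dots> = (\<Sum>x\<in>outs I. \<Sum>a\<in>UNIV. \<Sum>b\<in>UNIV. if x u = a \<and> x v = b then q x * (g (x u) * h (x v)) else 0)"
    by (rule sum.swap)
  also have "\<dots> = (\<Sum>x\<in>outs I. q x * (g (x u) * h (x v)))"
  proof (rule sum.cong[OF refl])
    fix x :: "'i \<Rightarrow> 'a"
    have "(\<Sum>a\<in>UNIV. \<Sum>b\<in>UNIV. if x u = a \<and> x v = b then q x * (g (x u) * h (x v)) else 0)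
       = (\<Sum>a\<in>UNIV. if x u = a then (\<Sum>b\<in>UNIV. if x v = b then q x * (g (x u) * h (x v)) else 0) else 0)"
      by (rule sum.cong[OF refl]) auto
    also have "\<dots> = q x * (g (x u) * h (x v))" by simp
    finally show "(\<Sum>a\<in>UNIV. \<Sum>b\<in>UNIV. if x u = a \<and> x v = b then q x * (g (x u) * h (x v)) else 0) = q x * (g (x u) * h (x v))" .
  qed
  finally show ?thesis by simp
qed

lemma Lind:
  fixes q :: "('i \<Rightarrow> 'a::finite) \<Rightarrow> real"
  assumes "finite I" "\<And>a b. marg2 I q u v a b = marg1 I q u a * marg1 I q v b"
  shows "(\<Sum>x\<in>outs I. q x * (g (x u) * h (x v))) = (\<Sum>a\<in>UNIV. g a * marg1 I q u a) * (\<Sum>b\<in>UNIV. h b * marg1 I q v b)"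
  unfolding L2[OF assms(1)] assms(2) sum_product
  by (simp add: mult_ac)

lemma ends:
  assumes bn: "bipartite_network n S adj" and "\<alpha> \<in> S" "i < n" "j < n" "i \<noteq> j" "adj \<alpha> i" "adj \<alpha> j"
  shows "{k. k < n \<and> adj \<alpha> k} = {i, j}"
proof -
  have c: "card {k. k < n \<and> adj \<alpha> k} = 2" using bn assms unfolding bipartite_network_def by blast
  have sub: "{i,j} \<subseteq> {k. k < n \<and> adj \<alpha> k}" using assms by auto
  have "card {i,j} = 2" using assms by simp
  then show ?thesis using card_subset_eq[OF _ sub] c by simp
qed

lemma uniq:
  assumes bn: "bipartite_network n S adj" and "\<alpha> \<in> S" "\<beta> \<in> S" "i < n" "j < n" "i \<noteq> j"
    "adj \<alpha> i" "adj \<alpha> j" "adj \<beta> i" "adj \<beta> j"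
  shows "\<alpha> = \<beta>"
proof (rule ccontr)
  assume ne: "\<alpha> \<noteq> \<beta>"
  have "{k. k < n \<and> adj \<alpha> k} = {k. k < n \<and> adj \<beta> k}"
    using ends[OF bn assms(2,4,5,6,7,8)] ends[OF bn assms(3,4,5,6,9,10)] by simp
  then show False using bn ne assms(2,3) unfolding bipartite_network_def by blast
qed

theorem lemma4:
  fixes n :: nat and S :: "'s set" and adj :: "'s \<Rightarrow> nat \<Rightarrow> bool"
    and p :: "(nat \<Rightarrow> 'a::finite) \<Rightarrow> real" and f :: "nat \<Rightarrow> 'a \<Rightarrow> real"
    and \<epsilon> :: "'s \<Rightarrow> real" and \<Gamma> :: "nat \<Rightarrow> nat \<Rightarrow> real"
  assumes "bipartite_network n S adj"
    and "causally_consistent n S adj p"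
    and "sign_function S \<epsilon>"
    and "sign_matrix n S adj \<epsilon> \<Gamma>"
  shows "psd n (schur (covariance n p f) \<Gamma>)"
proof -
  note bn = assms(1)
  define sw where "sw = transpose (0::nat) 1"
  define \<pi> where "\<pi> \<alpha> i = (if \<epsilon> \<alpha> = -1 \<and> (\<exists>j<n. adj \<alpha> j \<and> i < j) then sw else id)" for \<alpha> i
  have vp: "valid_perms n S adj 2 \<pi>"
    unfolding valid_perms_def \<pi>_def sw_def by (auto intro: permutes_swap_id)
  note H = assms(2)[unfolded causally_consistent_def]
  note C0 = conjunct1[OF conjunct2[OF H]]
  note cc = conjunct2[OF conjunct2[OF H]]
  note ex = cc[rule_format, of 2 \<pi>, OF order_refl vp]
  define I where "I = {..<n} \<times> {..<2::nat}"
  from ex obtain q :: "(nat \<times> nat \<Rightarrow> 'a) \<Rightarrow> real" where qH: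
          "is_distr ({..<n} \<times> {..<2}) q \<and>
           (\<forall>i<n. \<forall>k<2. \<forall>a. marg1 ({..<n} \<times> {..<2}) q (i,k) a = marg1 {..<n} p i a) \<and>
           (\<forall>i<n. \<forall>j<n. \<forall>k<2. \<forall>l<2. i \<noteq> j \<and> infl_share S adj \<pi> (i,k) (j,l) \<longrightarrow>
              (\<forall>a b. marg2 ({..<n} \<times> {..<2}) q (i,k) (j,l) a b = marg2 {..<n} p i j a b)) \<and>
           (\<forall>u\<in>{..<n} \<times> {..<2}. \<forall>v\<in>{..<n} \<times> {..<2}. u \<noteq> v \<and> \<not> infl_share S adj \<pi> u v \<longrightarrow>
              (\<forall>a b. marg2 ({..<n} \<times> {..<2}) q u v a b
                     = marg1 ({..<n} \<times> {..<2}) q u a * marg1 ({..<n} \<times> {..<2}) q v b))"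
    by (elim exE)
  have qd: "is_distr I q" unfolding I_def by (rule conjunct1[OF qH])
  have C1a: "\<And>i k a. i<n \<Longrightarrow> k<2 \<Longrightarrow> marg1 I q (i,k) a = marg1 {..<n} p i a"
    using conjunct1[OF conjunct2[OF qH]] unfolding I_def by blast
  have C1b: "\<And>i j k l a b. i<n \<Longrightarrow> j<n \<Longrightarrow> k<2 \<Longrightarrow> l<2 \<Longrightarrow> i \<noteq> j \<Longrightarrow> infl_share S adj \<pi> (i,k) (j,l) \<Longrightarrow>
              marg2 I q (i,k) (j,l) a b = marg2 {..<n} p i j a b"
    using conjunct1[OF conjunct2[OF conjunct2[OF qH]]] unfolding I_def by blast
  have C2: "\<And>u v a b. u\<in>I \<Longrightarrow> v\<in>I \<Longrightarrow> u \<noteq> v \<Longrightarrow> \<not> infl_share S adj \<pi> u v \<Longrightarrow>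
              marg2 I q u v a b = marg1 I q u a * marg1 I q v b"
    using conjunct2[OF conjunct2[OF conjunct2[OF qH]]] unfolding I_def by blast
  have finI: "finite I" unfolding I_def by simp
  define P1 where "P1 i = expect n p (\<lambda>x. f i (x i))" for i
  define P2 where "P2 i j = expect n p (\<lambda>x. f i (x i) * f j (x j))" for i j
  define Q where "Q u v = (\<Sum>x\<in>outs I. q x * (f (fst u) (x u) * f (fst v) (x v)))" for u v
  have P1m: "P1 i = (\<Sum>a\<in>UNIV. f i a * marg1 {..<n} p i a)" for i
    unfolding P1_def expect_def by (rule L1) simp
  have QA: "Q (i,k) (i,k) = P2 i i" if "i<n" "k<2" for i k
  proof -
    have "Q (i,k) (i,k) = (\<Sum>x\<in>outs I. q x * (\<lambda>c. f i c * f i c) (x (i,k)))"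
      unfolding Q_def by simp
    also have "\<dots> = (\<Sum>a\<in>UNIV. (f i a * f i a) * marg1 I q (i,k) a)" by (rule L1[OF finI])
    also have "\<dots> = (\<Sum>a\<in>UNIV. (f i a * f i a) * marg1 {..<n} p i a)" using C1a that by simp
    also have "\<dots> = (\<Sum>x\<in>outs {..<n}. p x * (\<lambda>c. f i c * f i c) (x i))" by (rule L1[symmetric]) simp
    finally show ?thesis unfolding P2_def expect_def by simp
  qed
  have QC: "Q (i,k) (j,l) = P2 i j" if "i<n" "j<n" "k<2" "l<2" "i\<noteq>j" "infl_share S adj \<pi> (i,k) (j,l)" for i j k l
  proof -
    have "Q (i,k) (j,l) = (\<Sum>a\<in>UNIV. \<Sum>b\<in>UNIV. f i a * f j b * marg2 I q (i,k) (j,l) a b)"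
      unfolding Q_def by (simp add: L2[OF finI])
    also have "\<dots> = (\<Sum>a\<in>UNIV. \<Sum>b\<in>UNIV. f i a * f j b * marg2 {..<n} p i j a b)" using C1b that by simp
    also have "\<dots> = P2 i j" unfolding P2_def expect_def by (rule L2[symmetric]) simp
    finally show ?thesis .
  qed
  have QD: "Q u v = P1 (fst u) * P1 (fst v)" if "u\<in>I" "v\<in>I" "u\<noteq>v" "\<not> infl_share S adj \<pi> u v" for u v
  proof -
    have "Q u v = (\<Sum>a\<in>UNIV. f (fst u) a * marg1 I q u a) * (\<Sum>b\<in>UNIV. f (fst v) b * marg1 I q v b)"
      unfolding Q_def by (rule Lind[OF finI]) (rule C2[OF that])
    also have "\<dots> = P1 (fst u) * P1 (fst v)" unfolding P1m using that C1a unfolding I_def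
      by (cases u; cases v) auto
    finally show ?thesis .
  qed
  have sw01: "sw k = l \<longleftrightarrow> k \<noteq> l" if "k < 2" "l < (2::nat)" for k l
    using that unfolding sw_def transpose_def by (cases "k = 0"; cases "l = 0") auto
  have share_iff: "infl_share S adj \<pi> (i,k) (j,l) \<longleftrightarrow> (if \<epsilon> \<alpha> = 1 then k = l else k \<noteq> l)"
    if "i<n" "j<n" "k<2" "l<2" "i\<noteq>j" "\<alpha>\<in>S" "adj \<alpha> i" "adj \<alpha> j" for i j k l \<alpha>
  proof -
    have "infl_share S adj \<pi> (i,k) (j,l) \<longleftrightarrow> \<pi> \<alpha> i k = \<pi> \<alpha> j l"
    proof
      assume "infl_share S adj \<pi> (i,k) (j,l)"
      then obtain \<beta> where b: "\<beta> \<in> S" "adj \<beta> i" "adj \<beta> j" "\<pi> \<beta> i k = \<pi> \<beta> j l"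
        unfolding infl_share_def by auto
      have "\<beta> = \<alpha>" by (rule uniq[OF bn b(1) that(6) that(1,2,5) b(2,3) that(7,8)])
      then show "\<pi> \<alpha> i k = \<pi> \<alpha> j l" using b(4) by simp
    next
      assume "\<pi> \<alpha> i k = \<pi> \<alpha> j l"
      then show "infl_share S adj \<pi> (i,k) (j,l)" unfolding infl_share_def using that(6,7,8) by auto
    qed
    moreover have e: "\<epsilon> \<alpha> = 1 \<or> \<epsilon> \<alpha> = -1" using assms(3) that unfolding sign_function_def by blast
    moreover have "\<pi> \<alpha> i k = \<pi> \<alpha> j l \<longleftrightarrow> (if \<epsilon> \<alpha> = 1 then k = l else k \<noteq> l)"
    proof (cases "\<epsilon> \<alpha> = 1")
      case True
      then have "\<pi> \<alpha> i = id" "\<pi> \<alpha> j = id" unfolding \<pi>_def by auto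
      then show ?thesis using True by simp
    next
      case False
      then have m: "\<epsilon> \<alpha> = -1" using e by simp
      have E: "{m. m < n \<and> adj \<alpha> m} = {i, j}" using ends[OF bn that(6,1,2,5,7,8)] .
      have E2: "m = i \<or> m = j" if "m < n" "adj \<alpha> m" for m
      proof -
        have "m \<in> {m. m < n \<and> adj \<alpha> m}" using that by simp
        then show ?thesis unfolding E by simp
      qed
      show ?thesis
      proof (cases "i < j")
        case True
        have w: "\<exists>m<n. adj \<alpha> m \<and> i < m" using that(2,8) True by auto
        have nw: "\<not> (\<exists>m<n. adj \<alpha> m \<and> j < m)"
        proof
          assume "\<exists>m<n. adj \<alpha> m \<and> j < m"
          then obtain m where "m < n" "adj \<alpha> m" "j < m" by auto
          then show False using E2[of m] True by linarith
        qed
        have p1: "\<pi> \<alpha> i = sw" using w m unfolding \<pi>_def by simp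
        have p2: "\<pi> \<alpha> j = id" unfolding \<pi>_def using nw by auto
        show ?thesis by (simp add: p1 p2 sw01[OF that(3,4)] m)
      next
        case False
        then have lt: "j < i" using that(5) by simp
        have w: "\<exists>m<n. adj \<alpha> m \<and> j < m" using that(1,7) lt by auto
        have nw: "\<not> (\<exists>m<n. adj \<alpha> m \<and> i < m)"
        proof
          assume "\<exists>m<n. adj \<alpha> m \<and> i < m"
          then obtain m where "m < n" "adj \<alpha> m" "i < m" by auto
          then show False using E2[of m] lt by linarith
        qed
        have p1: "\<pi> \<alpha> j = sw" using w m unfolding \<pi>_def by simp
        have p2: "\<pi> \<alpha> i = id" unfolding \<pi>_def using nw by auto
        have "sw l = k \<longleftrightarrow> l \<noteq> k" by (rule sw01[OF that(4,3)])
        then show ?thesis by (auto simp add: p1 p2 m)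
      qed
    qed
    ultimately show ?thesis by simp
  qed
  have noself: "\<not> infl_share S adj \<pi> (i,0) (i,1)" for i
    unfolding infl_share_def \<pi>_def sw_def by auto
  have share_imp: "share_source S adj i j" if "infl_share S adj \<pi> (i,k) (j,l)" for i j k l
    using that unfolding infl_share_def share_source_def by auto
  define D where "D i x = f i (x (i,0::nat)) - f i (x (i,1))" for i x
  define C where "C = covariance n p f"
  have Ceq: "C i j = P2 i j - P1 i * P1 j" for i j
    unfolding C_def covariance_def P1_def P2_def by simp
  have Tsplit: "(\<Sum>x\<in>outs I. q x * (D i x * D j x)) = Q (i,0) (j,0) - Q (i,0) (j,1) - Q (i,1) (j,0) + Q (i,1) (j,1)" for i j
    unfolding Q_def D_def
    by (simp add: sum.distrib[symmetric] sum_subtractf[symmetric] algebra_simps)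
  have noself2: "\<not> infl_share S adj \<pi> (i,1) (i,0)" for i
    unfolding infl_share_def \<pi>_def sw_def by auto
  have inI: "(i,k) \<in> I" if "i<n" "k<2" for i k using that unfolding I_def by simp
  have Gs: "\<Gamma> i j = \<epsilon> \<alpha>" if "\<alpha>\<in>S" "i<n" "j<n" "i\<noteq>j" "adj \<alpha> i" "adj \<alpha> j" for \<alpha> i j
    using assms(4) that unfolding sign_matrix_def by blast
  have T: "(\<Sum>x\<in>outs I. q x * (D i x * D j x)) = 2 * (C i j * \<Gamma> i j)" if ij: "i<n" "j<n" for i j
  proof (cases "i = j")
    case True
    have "\<Gamma> i i = 1" using assms(4) ij unfolding sign_matrix_def by blast
    moreover have "Q (i,0) (i,1) = P1 i * P1 i" using QD[OF inI inI _ noself2[of i]] QD[OF inI inI _ noself[of i]] ij by simp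
    moreover have "Q (i,1) (i,0) = P1 i * P1 i" using QD[OF inI inI _ noself2[of i]] ij by simp
    ultimately show ?thesis using True Tsplit QA[of i 0] QA[of i 1] ij Ceq by simp
  next
    case False
    show ?thesis
    proof (cases "share_source S adj i j")
      case True
      then obtain \<alpha> where a: "\<alpha> \<in> S" "adj \<alpha> i" "adj \<alpha> j" unfolding share_source_def by blast
      have G: "\<Gamma> i j = \<epsilon> \<alpha>" by (rule Gs[OF a(1) ij False a(2,3)])
      have e: "\<epsilon> \<alpha> = 1 \<or> \<epsilon> \<alpha> = -1" using assms(3) a unfolding sign_function_def by blast
      note si = share_iff[OF ij _ _ False a]
      have ne: "(i,k) \<noteq> (j,l)" for k l using False by simp
      show ?thesis
      proof (cases "\<epsilon> \<alpha> = 1")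
        case True
        have "Q (i,0) (j,0) = P2 i j" by (rule QC[OF ij _ _ False]) (auto simp: si True)
        moreover have "Q (i,1) (j,1) = P2 i j" by (rule QC[OF ij _ _ False]) (auto simp: si True)
        moreover have "Q (i,0) (j,1) = P1 i * P1 j" using QD[OF inI inI ne] ij si True by simp
        moreover have "Q (i,1) (j,0) = P1 i * P1 j" using QD[OF inI inI ne] ij si True by simp
        ultimately show ?thesis using Tsplit G True Ceq by simp
      next
        case False
        then have m: "\<epsilon> \<alpha> = -1" using e by simp
        have "Q (i,0) (j,1) = P2 i j" by (rule QC[OF ij _ _ \<open>i\<noteq>j\<close>]) (auto simp: si m)
        moreover have "Q (i,1) (j,0) = P2 i j" by (rule QC[OF ij _ _ \<open>i\<noteq>j\<close>]) (auto simp: si m)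
        moreover have "Q (i,0) (j,0) = P1 i * P1 j" using QD[OF inI inI ne] ij si m by simp
        moreover have "Q (i,1) (j,1) = P1 i * P1 j" using QD[OF inI inI ne] ij si m by simp
        ultimately show ?thesis using Tsplit G m Ceq by simp
      qed
    next
      case ns: False
      have nsh: "\<not> infl_share S adj \<pi> (i,k) (j,l)" for k l using share_imp ns by blast
      have ne: "(i,k) \<noteq> (j,l)" for k l using False by simp
      have "P2 i j = (\<Sum>a\<in>UNIV. f i a * marg1 {..<n} p i a) * (\<Sum>b\<in>UNIV. f j b * marg1 {..<n} p j b)"
        unfolding P2_def expect_def by (rule Lind) (use C0 ij False ns in auto)
      then have "C i j = 0" using Ceq P1m by simp
      moreover have "Q (i,k) (j,l) = P1 i * P1 j" if "k<2" "l<2" for k l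
        using QD[OF inI inI ne nsh] ij that by simp
      ultimately show ?thesis using Tsplit by simp
    qed
  qed
  have qnn: "q x \<ge> 0" if "x \<in> outs I" for x using qd that unfolding is_distr_def by blast
  have symC: "C i j = C j i" for i j unfolding Ceq P2_def expect_def by (simp add: mult_ac)
  show ?thesis unfolding psd_def
  proof (intro conjI allI impI)
    fix i j assume "i<n" "j<n"
    then show "schur (covariance n p f) \<Gamma> i j = schur (covariance n p f) \<Gamma> j i"
      using symC assms(4) unfolding schur_def C_def sign_matrix_def by metis
  next
    fix v :: "nat \<Rightarrow> real"
    have "0 \<le> (\<Sum>x\<in>outs I. q x * (\<Sum>i<n. v i * D i x)\<^sup>2)"
      by (rule sum_nonneg) (simp add: qnn)
    also have "\<dots> = (\<Sum>x\<in>outs I. \<Sum>i<n. \<Sum>j<n. v i * v j * (q x * (D i x * D j x)))"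
      by (simp add: power2_eq_square sum_product sum_distrib_left mult_ac)
    also have "\<dots> = (\<Sum>i<n. \<Sum>x\<in>outs I. \<Sum>j<n. v i * v j * (q x * (D i x * D j x)))"
      by (rule sum.swap)
    also have "\<dots> = (\<Sum>i<n. \<Sum>j<n. \<Sum>x\<in>outs I. v i * v j * (q x * (D i x * D j x)))"
      by (rule sum.cong[OF refl], rule sum.swap)
    also have "\<dots> = (\<Sum>i<n. \<Sum>j<n. v i * v j * (\<Sum>x\<in>outs I. q x * (D i x * D j x)))"
      by (simp add: sum_distrib_left)
    also have "\<dots> = (\<Sum>i<n. \<Sum>j<n. 2 * (v i * schur (covariance n p f) \<Gamma> i j * v j))"
      by (rule sum.cong[OF refl], rule sum.cong[OF refl]) (simp add: T schur_def C_def mult_ac)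
    also have "\<dots> = 2 * (\<Sum>i<n. \<Sum>j<n. v i * schur (covariance n p f) \<Gamma> i j * v j)"
      by (simp add: sum_distrib_left)
    finally show "0 \<le> (\<Sum>i<n. \<Sum>j<n. v i * schur (covariance n p f) \<Gamma> i j * v j)" by simp
  qed
qed

end
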